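(* For $I=1,2$ let $x_I\in\mathbb{R}$, $z_I\in\mathbb{C}$ with $z_2\neq0$, let $\vec r_I=(z_I+\bar z_I,\,-i(z_I-\bar z_I),\,x_I)\in\mathbb{R}^3$, $r_I=|\vec r_I|$, and define $$F=\frac{r_1^2r_2^2-(\vec r_1\cdot\vec r_2)^2}{2r_2|z_2|^2}+\frac{r_2(z_1\bar z_2-z_2\bar z_1)^2}{|z_2|^4},$$ regarded as a function of the independent real variables $x_1,x_2$ and complex variables $z_1,z_2$. Let $K=F-x_1\frac{\partial F}{\partial x_1}-x_2\frac{\partial F}{\partial x_2}$ (equivalently, $K=F-x_1(u_1+\bar u_1)-x_2(u_2+\bar u_2)$ with $\partial F/\partial x_I=u_I+\bar u_I$). Then $$K=-\frac{2\,|\vec r_1\times\vec r_2|^2}{r_2^3}.$$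
   Context: $F$ is the closed-form (residue) evaluation of the generalized Legendre transform function $\frac{1}{2\pi i}\oint\frac{d\zeta}{\zeta}\frac{(\eta_1^{(2)})^2}{\eta_2^{(2)}}$ for the ${\cal O}(2)$ multiplets $\eta^{(2)}_I=\frac{\bar z_I}{\zeta}+x_I-z_I\zeta$; $K$ is the resulting hyperkähler potential of the associated 8-dimensional Swann bundle. *)

theory Defs
  imports "HOL-Analysis.Analysis"
begin

definition rvec :: "complex \<Rightarrow> real \<Rightarrow> real^3" where
  "rvec z x = vector [Re (z + cnj z), Re (- \<i> * (z - cnj z)), x]"

text \<open>The term (z1 cnj z2 - z2 cnj z1)^2 is real
  (it equals -4 (Im (z1 cnj z2))^2), so we take its real part.\<close>
definition Ffun :: "real \<Rightarrow> real \<Rightarrow> complex \<Rightarrow> complex \<Rightarrow> real" where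
  "Ffun x1 x2 z1 z2 =
     ((norm (rvec z1 x1))^2 * (norm (rvec z2 x2))^2 - (rvec z1 x1 \<bullet> rvec z2 x2)^2)
       / (2 * norm (rvec z2 x2) * (cmod z2)^2)
     + norm (rvec z2 x2) * Re ((z1 * cnj z2 - z2 * cnj z1)^2) / (cmod z2)^4"

definition Kfun :: "real \<Rightarrow> real \<Rightarrow> complex \<Rightarrow> complex \<Rightarrow> real" where
  "Kfun x1 x2 z1 z2 =
     Ffun x1 x2 z1 z2
     - x1 * deriv (\<lambda>t. Ffun t x2 z1 z2) x1
     - x2 * deriv (\<lambda>t. Ffun x1 t z1 z2) x2"

end

theory Submission imports Defs begin
lemma rvec_simps: "rvec z x $ 1 = 2*Re z" "rvec z x $ 2 = 2*Im z" "rvec z x $ 3 = x"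
  by (simp_all add: rvec_def)

lemma norm_rvec: "norm (rvec z x) = sqrt (4*(Re z^2 + Im z^2) + x^2)"
  unfolding norm_eq_sqrt_inner by (simp add: inner_vec_def sum_3 rvec_simps power2_eq_square algebra_simps)

lemma inner_rvec: "rvec z x \<bullet> rvec w y = 4*(Re z*Re w + Im z*Im w) + x*y"
  by (simp add: inner_vec_def sum_3 rvec_simps algebra_simps)

lemma re_sq: "Re ((z1*cnj z2 - z2*cnj z1)^2) = -4*(Im z1*Re z2 - Re z1*Im z2)^2"
  by (simp add: power2_eq_square algebra_simps)

lemma cross_sq: "(norm (cross3 (rvec z1 x1) (rvec z2 x2)))^2 =
   4*(Im z1*x2 - x1*Im z2)^2 + 4*(x1*Re z2 - Re z1*x2)^2 + 16*(Re z1*Im z2 - Im z1*Re z2)^2"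
  unfolding power2_norm_eq_inner by (simp add: cross3_simps rvec_simps power2_eq_square)

lemma cmod_sq: "(cmod z)^2 = Re z^2 + Im z^2"
  by (simp add: cmod_power2)


lemma sqrt_der: assumes "m > 0" "D = x / sqrt(4*m+x^2)"
  shows "((\<lambda>t. sqrt(4*m+t^2)) has_real_derivative D) (at x)"
proof -
  have p: "4*m+x^2 > 0" using assms by (simp add: add_pos_nonneg)
  have i: "((\<lambda>t. 4*m+t^2) has_real_derivative 2*x) (at x)"
    by (auto intro!: derivative_eq_intros)
  have "((\<lambda>t. sqrt(4*m+t^2)) has_real_derivative (inverse (sqrt (4*m+x^2)) / 2) * (2*x)) (at x)"
    by (rule DERIV_chain2[OF DERIV_real_sqrt[OF p] i])
  moreover have "(inverse (sqrt (4*m+x^2)) / 2) * (2*x) = D" using assms(2) by (simp add: field_simps)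
  ultimately show ?thesis by simp
qed

lemma keyK:
  fixes a b c d x1 x2 m r :: real
  assumes m: "m = c^2+d^2" "m > 0" and r: "r = sqrt(4*m+x2^2)"
  shows "(((4*(a^2+b^2) + x1^2)*(4*m + x2^2) - (4*(a*c+b*d) + x1*x2)^2)/(2 * r*m)
               + r*(-4*(b*c-a*d)^2)/m^2)
        - x1 * ((2*x1*(4*m+x2^2) - 2*(4*(a*c+b*d) + x1*x2)*x2)/(2 * r*m))
        - x2 * ((((2*x2*(4*(a^2+b^2)+x1^2) - 2*x1*(4*(a*c+b*d)+x1*x2)) * (2 * r * m)
     - ((4*(a^2+b^2) + x1^2)*(4*m + x2^2) - (4*(a*c+b*d) + x1*x2)^2) * (x2 / r * 2 * m))
     / ((2 * r * m) * (2 * r * m))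
     + (x2 / r * (-4*(b*c-a*d)^2) * m^2) / (m^2 * m^2)))
      = - 2 * (4*(b*x2 - x1*d)^2 + 4*(x1*c - a*x2)^2 + 16*(a*d - b*c)^2) / r^3"
proof -
  have S: "4*m+x2^2 > 0" using m by (simp add: add_pos_nonneg)
  have rp: "r > 0" using S r by simp
  have r2: "r^2 = 4*m+x2^2" using S r by simp
  show ?thesis
    using rp m(2) r2
    apply (simp add: field_simps)
    using m(1) r2 apply algebra
    done
qed
theorem mainTheorem3:
  fixes x1 x2 :: real and z1 z2 :: complex
  assumes "z2 \<noteq> 0"
  shows "(\<lambda>t. Ffun t x2 z1 z2) differentiable (at x1)
    \<and> (\<lambda>t. Ffun x1 t z1 z2) differentiable (at x2)
    \<and> Kfun x1 x2 z1 z2 =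
      - 2 * (norm (cross3 (rvec z1 x1) (rvec z2 x2)))^2 / (norm (rvec z2 x2))^3"
proof -
  define a where "a = Re z1"
  define b where "b = Im z1"
  define c where "c = Re z2"
  define d where "d = Im z2"
  define m where "m = c^2+d^2"
  have "c \<noteq> 0 \<or> d \<noteq> 0" using assms complex_eq_iff c_def d_def by auto
  then have mpos: "m > 0" by (simp add: m_def sum_power2_gt_zero_iff)
  define G where "G = (\<lambda>t s. ((4*(a^2+b^2) + t^2)*(4*m + s^2) - (4*(a*c+b*d) + t * s)^2)/(2 * sqrt(4*m+s^2)*m)
               + sqrt(4*m+s^2)*(-4*(b*c-a*d)^2)/m^2)"
  have "(cmod z2)^4 = ((cmod z2)^2)^2" by simp
  then have cm4: "(cmod z2)^4 = m^2" unfolding cmod_sq m_def c_def d_def .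
  have FG: "Ffun t s z1 z2 = G t s" for t s
  proof -
    have p: "0 \<le> 4*(c^2+d^2) + s^2" by simp
    show ?thesis
      unfolding Ffun_def G_def norm_rvec inner_rvec re_sq cm4 cmod_sq
      using p by (simp add: a_def b_def c_def d_def m_def power2_eq_square algebra_simps)
  qed
  have S2: "4*m+x2^2 > 0" using mpos zero_le_power2[of x2] by linarith
  have nz: "2 * sqrt(4*m+x2^2)*m \<noteq> 0" using mpos S2 by simp
  have m2nz: "m^2 \<noteq> 0" using mpos by simp
  have rpos: "sqrt(4*m+x2^2) > 0" using S2 by simp
  define D1 where "D1 = ((2*x1*(4*m+x2^2) - 2*(4*(a*c+b*d) + x1*x2)*x2)/(2 * sqrt(4*m+x2^2)*m))"
  define D2 where "D2 = (((2*x2*(4*(a^2+b^2)+x1^2) - 2*x1*(4*(a*c+b*d)+x1*x2)) * (2 * sqrt(4*m+x2^2) * m)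
     - ((4*(a^2+b^2) + x1^2)*(4*m + x2^2) - (4*(a*c+b*d) + x1*x2)^2) * (x2 / sqrt(4*m+x2^2) * 2 * m))
     / ((2 * sqrt(4*m+x2^2) * m) * (2 * sqrt(4*m+x2^2) * m))
     + (x2 / sqrt(4*m+x2^2) * (-4*(b*c-a*d)^2) * m^2) / (m^2 * m^2))"
  have d1: "((\<lambda>t. Ffun t x2 z1 z2) has_real_derivative D1) (at x1)"
    unfolding FG G_def
    apply (rule sqrt_der[OF mpos] derivative_eq_intros refl nz)+
    unfolding D1_def using nz by (simp add: field_simps)
  define r where "r = sqrt(4*m+x2^2)"
  have rp: "r > 0" "r^2 = 4*m+x2^2" using rpos S2 unfolding r_def by simp_all
  have mr: "m = (r^2 - x2^2)/4" using rp(2) by simp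
  have mr2: "r^2 - x2^2 > 0" using rp(2) mpos by simp
  have rr1: "r * r = x2^2 + m*4" and rr2: "r * (r * X) = (x2^2 + m*4) * X" for X
    using rp(2) by (simp_all add: power2_eq_square algebra_simps)
  have d2: "((\<lambda>t. Ffun x1 t z1 z2) has_real_derivative D2) (at x2)"
    unfolding FG G_def
    apply (rule sqrt_der[OF mpos] derivative_eq_intros refl nz m2nz)+
    unfolding D2_def
    apply (unfold r_def[symmetric])
    apply simp
    done
  have K: "Kfun x1 x2 z1 z2 = G x1 x2 - x1 * D1 - x2 * D2"
    unfolding Kfun_def FG[symmetric] using d1 d2 DERIV_imp_deriv by metis
  have N: "norm (rvec z2 x2) = sqrt(4*m+x2^2)" unfolding norm_rvec m_def c_def d_def by simp
  have "G x1 x2 - x1 * D1 - x2 * D2 = - 2 * (4*(b*x2 - x1*d)^2 + 4*(x1*c - a*x2)^2 + 16*(a*d - b*c)^2) / (sqrt(4*m+x2^2))^3"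
    unfolding G_def D1_def D2_def by (rule keyK[OF m_def mpos refl])
  then show ?thesis
    using d1 d2 K unfolding N cross_sq
    by (auto simp: real_differentiable_def a_def b_def c_def d_def)
qed
end
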